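(* Let $p\ge K\ge 2$ and $n\ge K$. Let $A=[A_1,\dots,A_K]\in\mathbb{R}^{p\times K}$ have nonnegative entries with each column summing to $1$, and let $W\in\mathbb{R}^{K\times n}$ have nonnegative entries with each column summing to $1$. Set $D_0=AW$ and assume $\mathrm{rank}(D_0)=K$, with the $K$ nonzero singular values of $D_0$ distinct. Let $a_i^T$ denote the $i$-th row of $A$ and assume every $a_i\neq 0$. Let $\xi_1,\dots,\xi_K$ be the left singular vectors of $D_0$ associated with its $K$ nonzero singular values, in decreasing order of the singular values, and let $\Xi=[\xi_1,\dots,\xi_K]$. Let $V=[V_1,\dots,V_K]\in\mathbb{R}^{K\times K}$ be the matrix with $\Xi=AV$. Assume that all entries of $\xi_1$ and of $V_1$ are positive. Define $R\in\mathbb{R}^{p\times(K-1)}$ by $R(i,k)=\xi_{k+1}(i)/\xi_1(i)$ and $V^*\in\mathbb{R}^{K\times(K-1)}$ by $V^*(j,k)=V_{k+1}(j)/V_1(j)$, for $1\le i\le p$, $1\le j\le K$, $1\le k\le K-1$. Let $r_1,\dots,r_p\in\mathbb{R}^{K-1}$ be the rows of $R$, let $v_1^*,\dots,v_K^*\in\mathbb{R}^{K-1}$ be the rows of $V^*$, and let $\Pi=[\mathrm{diag}(\xi_1)]^{-1}A\,\mathrm{diag}(V_1)\in\mathbb{R}^{p\times K}$ with rows $\pi_1,\dots,\pi_p$. Then: (i) $v_1^*,\dots,v_K^*$ are affinely independent, so they are the vertices of a non-degenerate simplex $\mathcal{S}_K^*\subset\mathbb{R}^{K-1}$; (ii) for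 every $1\le i\le p$, $\pi_i$ is a weight vector (nonnegative entries summing to $1$), with $\pi_i(j)>0$ if and only if $a_i(j)>0$, and $r_i=\sum_{j=1}^K\pi_i(j)v_j^*$; in particular, $r_i$ lies in $\mathcal{S}_K^*$, in the relative interior of the face of $\mathcal{S}_K^*$ spanned by $\{v_j^*: a_i(j)>0\}$; (iii) for every $1\le i\le p$ and $1\le k\le K$, $r_i=v_k^*$ if and only if word $i$ is an anchor word of topic $k$, i.e. $a_i(j)=0$ for all $j\ne k$.
   Context: This is the noiseless topic model (pLSI): column $k$ of $A$ is the word distribution of topic $k$ over a vocabulary of $p$ words, and column $j$ of $W$ is the topic mixing proportion of document $j$. Word $i$ is called an anchor word of topic $k$ if $A(i,k)\ne 0$ and $A(i,\ell)=0$ for all $\ell\ne k$. A weight vector is a vector with nonnegative entries summing to $1$. Since $\mathrm{rank}(D_0)=K$, the column span of $\Xi$ equals that of $A$, so the $K\times K$ matrix $V$ with $\Xi=AV$ exists, is unique and is nonsingular. *)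

theory Defs
  imports "Jordan_Normal_Form.DL_Rank_Submatrix"
begin

(* Matrices are Jordan_Normal_Form matrices; all indices are 0-based.
   Topic 1 / singular vector 1 of the paper corresponds to index 0. *)

definition weight_vector :: "real vec \<Rightarrow> bool" where
  "weight_vector w \<longleftrightarrow> (\<forall>j<dim_vec w. w $ j \<ge> 0) \<and> (\<Sum>j<dim_vec w. w $ j) = 1"

definition singular_pair :: "real mat \<Rightarrow> real \<Rightarrow> real vec \<Rightarrow> real vec \<Rightarrow> bool" where
  "singular_pair D s u w \<longleftrightarrow>
     u \<in> carrier_vec (dim_row D) \<and> w \<in> carrier_vec (dim_col D) \<and>
     u \<bullet> u = 1 \<and> w \<bullet> w = 1 \<and> D *\<^sub>v w = s \<cdot>\<^sub>v u \<and> transpose_mat D *\<^sub>v u = s \<cdot>\<^sub>v w"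

definition affinely_independent :: "nat \<Rightarrow> nat \<Rightarrow> (nat \<Rightarrow> real vec) \<Rightarrow> bool" where
  "affinely_independent d m v \<longleftrightarrow>
     (\<forall>c::nat \<Rightarrow> real. (\<Sum>j<m. c j) = 0 \<and> (\<forall>k<d. (\<Sum>j<m. c j * v j $ k) = 0)
        \<longrightarrow> (\<forall>j<m. c j = 0))"

definition anchor_word :: "real mat \<Rightarrow> nat \<Rightarrow> nat \<Rightarrow> bool" where
  "anchor_word A i k \<longleftrightarrow> A $$ (i, k) \<noteq> 0 \<and> (\<forall>l<dim_col A. l \<noteq> k \<longrightarrow> A $$ (i, l) = 0)"

end

theory Submission
  imports Defs
begin


lemma sv_orth:
  fixes D :: "real mat"
  assumes a: "singular_pair D s1 u1 w1" and b: "singular_pair D s2 u2 w2"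
    and s1: "s1 > 0" and s2: "s2 > 0" and ne: "s1 \<noteq> s2"
  shows "u1 \<bullet> u2 = 0"
proof -
  have D: "D \<in> carrier_mat (dim_row D) (dim_col D)" by auto
  have Dt: "transpose_mat D \<in> carrier_mat (dim_col D) (dim_row D)" by auto
  note a' = a[unfolded singular_pair_def] and b' = b[unfolded singular_pair_def]
  have u1: "u1 \<in> carrier_vec (dim_row D)" and w1: "w1 \<in> carrier_vec (dim_col D)"
    and u2: "u2 \<in> carrier_vec (dim_row D)" and w2: "w2 \<in> carrier_vec (dim_col D)"
    and Dw1: "D *\<^sub>v w1 = s1 \<cdot>\<^sub>v u1" and Dtu1: "transpose_mat D *\<^sub>v u1 = s1 \<cdot>\<^sub>v w1"
    and Dw2: "D *\<^sub>v w2 = s2 \<cdot>\<^sub>v u2" and Dtu2: "transpose_mat D *\<^sub>v u2 = s2 \<cdot>\<^sub>v w2"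
    using a' b' by auto
  have du: "dim_vec u1 = dim_vec u2" "dim_vec w1 = dim_vec w2" using u1 u2 w1 w2 by auto
  have e1: "s2 * (u1 \<bullet> u2) = s1 * (w1 \<bullet> w2)"
  proof -
    have "s2 * (u1 \<bullet> u2) = u1 \<bullet> (s2 \<cdot>\<^sub>v u2)" using du by simp
    also have "\<dots> = u1 \<bullet> (D *\<^sub>v w2)" using Dw2 Dtu2 by simp
    also have "\<dots> = (transpose_mat D *\<^sub>v u1) \<bullet> w2"
      using transpose_vec_mult_scalar[OF D w2 u1] by simp
    also have "\<dots> = (s1 \<cdot>\<^sub>v w1) \<bullet> w2" using Dtu1 Dw1 by simp
    also have "\<dots> = s1 * (w1 \<bullet> w2)" using du by simp
    finally show ?thesis .
  qed
  have e2: "s2 * (w1 \<bullet> w2) = s1 * (u1 \<bullet> u2)"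
  proof -
    have "s2 * (w1 \<bullet> w2) = w1 \<bullet> (s2 \<cdot>\<^sub>v w2)" using du by simp
    also have "\<dots> = w1 \<bullet> (transpose_mat D *\<^sub>v u2)" using Dw2 Dtu2 by simp
    also have "\<dots> = (transpose_mat (transpose_mat D) *\<^sub>v w1) \<bullet> u2"
      using transpose_vec_mult_scalar[OF Dt u2 w1] by simp
    also have "\<dots> = (s1 \<cdot>\<^sub>v u1) \<bullet> u2" using Dtu1 Dw1 by simp
    also have "\<dots> = s1 * (u1 \<bullet> u2)" using du by simp
    finally show ?thesis .
  qed
  have "s2 * (s2 * (u1 \<bullet> u2)) = s1 * (s1 * (u1 \<bullet> u2))"
  proof -
    have "s2 * (s2 * (u1 \<bullet> u2)) = s2 * (s1 * (w1 \<bullet> w2))" using e1 by simp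
    also have "\<dots> = s1 * (s2 * (w1 \<bullet> w2))" by (simp only: mult.left_commute)
    also have "\<dots> = s1 * (s1 * (u1 \<bullet> u2))" using e2 by simp
    finally show ?thesis .
  qed
  hence "(s2 * s2 - s1 * s1) * (u1 \<bullet> u2) = 0" by (simp add: algebra_simps)
  moreover have "s2 * s2 \<noteq> s1 * s1"
  proof (cases "s1 < s2")
    case True
    hence "s1 * s1 < s2 * s2" using s1 by (intro mult_strict_mono) auto
    thus ?thesis by simp
  next
    case False
    hence "s2 < s1" using ne by simp
    hence "s2 * s2 < s1 * s1" using s2 by (intro mult_strict_mono) auto
    thus ?thesis by simp
  qed
  ultimately show ?thesis by simp
qed

theorem lemma2:
  fixes p K n :: nat and A W V :: "real mat"
    and \<sigma> :: "nat \<Rightarrow> real" and \<xi> \<eta> :: "nat \<Rightarrow> real vec"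
    and \<Xi> R Vs Pm :: "real mat"
  assumes K2: "K \<ge> 2" and pK: "p \<ge> K" and nK: "n \<ge> K"
    and A_dim: "A \<in> carrier_mat p K"
    and A_nonneg: "\<forall>i<p. \<forall>k<K. A $$ (i, k) \<ge> 0"
    and A_cols: "\<forall>k<K. (\<Sum>i<p. A $$ (i, k)) = 1"
    and W_dim: "W \<in> carrier_mat K n"
    and W_nonneg: "\<forall>k<K. \<forall>j<n. W $$ (k, j) \<ge> 0"
    and W_cols: "\<forall>j<n. (\<Sum>k<K. W $$ (k, j)) = 1"
    and rank: "vec_space.rank p (A * W) = K"
    and sv_pos: "\<sigma> (K - 1) > 0"
    and sv_decr: "\<forall>k. k + 1 < K \<longrightarrow> \<sigma> (k + 1) < \<sigma> k"
    and sv_pairs: "\<forall>k<K. singular_pair (A * W) (\<sigma> k) (\<xi> k) (\<eta> k)"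
    and rows_nz: "\<forall>i<p. \<exists>k<K. A $$ (i, k) \<noteq> 0"
    and Xi_def: "\<Xi> = mat p K (\<lambda>(i, k). \<xi> k $ i)"
    and V_dim: "V \<in> carrier_mat K K"
    and Xi_AV: "\<Xi> = A * V"
    and xi1_pos: "\<forall>i<p. \<xi> 0 $ i > 0"
    and V1_pos: "\<forall>j<K. V $$ (j, 0) > 0"
    and R_def: "R = mat p (K - 1) (\<lambda>(i, k). \<xi> (k + 1) $ i / \<xi> 0 $ i)"
    and Vs_def: "Vs = mat K (K - 1) (\<lambda>(j, k). V $$ (j, k + 1) / V $$ (j, 0))"
    and Pi_def: "Pm = mat p K (\<lambda>(i, j). (1 / \<xi> 0 $ i) * A $$ (i, j) * V $$ (j, 0))"
  shows "affinely_independent (K - 1) K (\<lambda>j. row Vs j)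
    \<and> (\<forall>i<p. weight_vector (row Pm i)
           \<and> (\<forall>j<K. Pm $$ (i, j) > 0 \<longleftrightarrow> A $$ (i, j) > 0)
           \<and> row R i = vec (K - 1) (\<lambda>k. \<Sum>j<K. Pm $$ (i, j) * row Vs j $ k))
    \<and> (\<forall>i<p. \<forall>k<K. row R i = row Vs k \<longleftrightarrow> anchor_word A i k)"
proof -
  have sig_pos: "\<sigma> k > 0" if "k < K" for k
  proof -
    have "\<forall>m. m < K \<longrightarrow> \<sigma> (K - 1 - m) \<ge> \<sigma> (K - 1)"
    proof (intro allI)
      fix m show "m < K \<longrightarrow> \<sigma> (K - 1 - m) \<ge> \<sigma> (K - 1)"
      proof (induction m)
        case 0 then show ?case by simp
      next
        case (Suc m)
        show ?case
        proof
          assume "Suc m < K"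
          hence "\<sigma> (K - 1 - Suc m + 1) < \<sigma> (K - 1 - Suc m)" using sv_decr by auto
          moreover have "K - 1 - Suc m + 1 = K - 1 - m" using \<open>Suc m < K\<close> by simp
          ultimately show "\<sigma> (K - 1 - Suc m) \<ge> \<sigma> (K - 1)" using Suc \<open>Suc m < K\<close> by simp
        qed
      qed
    qed
    from this[rule_format, of "K - 1 - k"] that have "\<sigma> k \<ge> \<sigma> (K - 1)" by simp
    thus ?thesis using sv_pos by simp
  qed
  have AW: "A * W \<in> carrier_mat p n" using A_dim W_dim by simp
  have xi_car: "\<xi> k \<in> carrier_vec p" if "k < K" for k
    using sv_pairs that AW unfolding singular_pair_def by auto
  have xi_eq: "\<xi> k $ i = (\<Sum>j<K. A $$ (i, j) * V $$ (j, k))" if "i < p" "k < K" for i k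
  proof -
    have "\<xi> k $ i = \<Xi> $$ (i, k)" using Xi_def that by simp
    also have "\<dots> = row A i \<bullet> col V k" using Xi_AV that A_dim V_dim by simp
    also have "\<dots> = (\<Sum>j<K. A $$ (i, j) * V $$ (j, k))"
      using that A_dim V_dim by (simp add: scalar_prod_def lessThan_atLeast0)
    finally show ?thesis .
  qed
  have orth: "\<xi> k \<bullet> \<xi> l = (if k = l then 1 else 0)" if "k < K" "l < K" for k l
  proof (cases "k = l")
    case True thus ?thesis using sv_pairs that unfolding singular_pair_def by auto
  next
    case False
    have "\<sigma> k \<noteq> \<sigma> l"
    proof
      assume eq: "\<sigma> k = \<sigma> l"
      have mono: "\<sigma> b < \<sigma> a" if "a < b" "b < K" for a b
        using that
      proof (induction b)
        case 0 then show ?case by simp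
      next
        case (Suc b)
        have "\<sigma> (Suc b) < \<sigma> b" using sv_decr Suc.prems by simp
        moreover have "a = b \<or> a < b" using Suc.prems by auto
        ultimately show ?case using Suc by auto
      qed
      show False using False mono[of k l] mono[of l k] that eq by (cases "k < l") auto
    qed
    thus ?thesis using sv_orth[of "A * W" "\<sigma> k" "\<xi> k" "\<eta> k" "\<sigma> l" "\<xi> l" "\<eta> l"]
      sv_pairs sig_pos that False by auto
  qed
  have Xi_car: "\<Xi> \<in> carrier_mat p K" using Xi_def by simp
  have col_Xi: "col \<Xi> k = \<xi> k" if "k < K" for k
    using Xi_def that xi_car[OF that] by (intro eq_vecI) auto
  have XtX: "transpose_mat \<Xi> * \<Xi> = 1\<^sub>m K"
  proof (rule eq_matI)
    fix k l assume kl: "k < dim_row (1\<^sub>m K)" "l < dim_col (1\<^sub>m K)"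
    hence "(transpose_mat \<Xi> * \<Xi>) $$ (k, l) = col \<Xi> k \<bullet> col \<Xi> l" using Xi_car by simp
    also have "\<dots> = \<xi> k \<bullet> \<xi> l" using col_Xi kl by simp
    finally show "(transpose_mat \<Xi> * \<Xi>) $$ (k, l) = 1\<^sub>m K $$ (k, l)" using orth kl by simp
  qed (use Xi_car in auto)
  define B where "B = transpose_mat \<Xi> * A"
  have B_car: "B \<in> carrier_mat K K" using B_def Xi_car A_dim by simp
  have "B * V = transpose_mat \<Xi> * (A * V)"
    unfolding B_def using Xi_car A_dim V_dim by (intro assoc_mult_mat) auto
  hence "B * V = 1\<^sub>m K" using XtX Xi_AV by simp
  hence VB: "V * B = 1\<^sub>m K" using mat_mult_left_right_inverse[OF B_car V_dim] by simp
  have V_inj: "\<forall>j<K. d j = 0" if hd: "\<forall>k<K. (\<Sum>j<K. d j * V $$ (j, k)) = 0" for d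
  proof -
    define dv where "dv = vec K d"
    have dv_car: "dv \<in> carrier_vec K" using dv_def by simp
    have tv: "transpose_mat V *\<^sub>v dv = 0\<^sub>v K"
    proof (rule eq_vecI)
      fix k assume "k < dim_vec (0\<^sub>v K :: real vec)"
      hence k: "k < K" by simp
      have "(transpose_mat V *\<^sub>v dv) $ k = col V k \<bullet> dv" using k V_dim by simp
      also have "\<dots> = (\<Sum>j<K. d j * V $$ (j, k))"
        using k V_dim dv_def by (simp add: scalar_prod_def lessThan_atLeast0 mult.commute)
      finally show "(transpose_mat V *\<^sub>v dv) $ k = 0\<^sub>v K $ k" using hd k by simp
    qed (use V_dim in simp)
    have "dv = transpose_mat (V * B) *\<^sub>v dv" using VB dv_car by simp
    also have "\<dots> = (transpose_mat B * transpose_mat V) *\<^sub>v dv"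
      using transpose_mult[OF V_dim B_car] by simp
    also have "\<dots> = transpose_mat B *\<^sub>v (transpose_mat V *\<^sub>v dv)"
      using B_car V_dim dv_car by (intro assoc_mult_mat_vec) auto
    also have "\<dots> = 0\<^sub>v K" unfolding tv
    proof (rule eq_vecI)
      fix k assume "k < dim_vec (0\<^sub>v K :: real vec)"
      hence k: "k < K" by simp
      have "row (transpose_mat B) k \<in> carrier_vec K" using B_car k by simp
      thus "(transpose_mat B *\<^sub>v 0\<^sub>v K) $ k = 0\<^sub>v K $ k" using k B_car by simp
    qed (use B_car in simp)
    finally have "dv = 0\<^sub>v K" .
    thus ?thesis using dv_def by (metis index_vec index_zero_vec(1))
  qed
  have Vs_ent: "row Vs j $ k = V $$ (j, k + 1) / V $$ (j, 0)" if "j < K" "k < K - 1" for j k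
    using Vs_def that by simp
  have aff: "affinely_independent (K - 1) K (\<lambda>j. row Vs j)"
    unfolding affinely_independent_def
  proof (rule allI, rule impI)
    fix c :: "nat \<Rightarrow> real"
    assume h: "(\<Sum>j<K. c j) = 0 \<and> (\<forall>k<K - 1. (\<Sum>j<K. c j * row Vs j $ k) = 0)"
    define d where "d j = c j / V $$ (j, 0)" for j
    have "\<forall>k<K. (\<Sum>j<K. d j * V $$ (j, k)) = 0"
    proof (intro allI impI)
      fix k assume k: "k < K"
      show "(\<Sum>j<K. d j * V $$ (j, k)) = 0"
      proof (cases k)
        case 0
        have "(\<Sum>j<K. d j * V $$ (j, k)) = (\<Sum>j<K. c j)"
          using 0 V1_pos d_def by (intro sum.cong) (auto simp: less_imp_neq[symmetric])
        thus ?thesis using h by simp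
      next
        case (Suc k')
        have "(\<Sum>j<K. d j * V $$ (j, k)) = (\<Sum>j<K. c j * row Vs j $ k')"
          using Suc k d_def Vs_ent by (intro sum.cong) auto
        thus ?thesis using h Suc k by simp
      qed
    qed
    hence "\<forall>j<K. d j = 0" using V_inj[of d] by blast
    hence dz: "\<forall>j<K. c j / V $$ (j, 0) = 0" using d_def by simp
    show "\<forall>j<K. c j = 0"
    proof (intro allI impI)
      fix j assume j: "j < K"
      hence "V $$ (j, 0) \<noteq> 0" using V1_pos by (metis less_irrefl)
      thus "c j = 0" using dz j by auto
    qed
  qed
  have Pm_ent: "Pm $$ (i, j) = A $$ (i, j) * V $$ (j, 0) / \<xi> 0 $ i" if "i < p" "j < K" for i j
    using Pi_def that by simp
  have part2: "weight_vector (row Pm i)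
           \<and> (\<forall>j<K. Pm $$ (i, j) > 0 \<longleftrightarrow> A $$ (i, j) > 0)
           \<and> row R i = vec (K - 1) (\<lambda>k. \<Sum>j<K. Pm $$ (i, j) * row Vs j $ k)" if i: "i < p" for i
  proof (intro conjI)
    have dimP: "dim_vec (row Pm i) = K" using Pi_def by simp
    have "(\<Sum>j<K. row Pm i $ j) = (\<Sum>j<K. A $$ (i, j) * V $$ (j, 0)) / \<xi> 0 $ i"
      using Pm_ent i Pi_def by (simp add: sum_divide_distrib)
    also have "\<dots> = \<xi> 0 $ i / \<xi> 0 $ i" using xi_eq[OF i, of 0] K2 by simp
    also have "\<dots> = 1" using xi1_pos i by (metis divide_self less_irrefl)
    finally show "weight_vector (row Pm i)" unfolding weight_vector_def dimP
      using Pm_ent i Pi_def A_nonneg V1_pos xi1_pos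
      by (auto intro!: divide_nonneg_pos mult_nonneg_nonneg simp: less_imp_le)
    show "\<forall>j<K. Pm $$ (i, j) > 0 \<longleftrightarrow> A $$ (i, j) > 0"
    proof (intro allI impI)
      fix j assume j: "j < K"
      have "V $$ (j, 0) > 0" "\<xi> 0 $ i > 0" using V1_pos xi1_pos i j by auto
      thus "Pm $$ (i, j) > 0 \<longleftrightarrow> A $$ (i, j) > 0" using Pm_ent[OF i j]
        by (auto simp: zero_less_divide_iff zero_less_mult_iff)
    qed
    show "row R i = vec (K - 1) (\<lambda>k. \<Sum>j<K. Pm $$ (i, j) * row Vs j $ k)"
    proof (rule eq_vecI)
      fix k assume "k < dim_vec (vec (K - 1) (\<lambda>k. \<Sum>j<K. Pm $$ (i, j) * row Vs j $ k))"
      hence k: "k < K - 1" by simp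
      have "(\<Sum>j<K. Pm $$ (i, j) * row Vs j $ k) = (\<Sum>j<K. A $$ (i, j) * V $$ (j, k + 1)) / \<xi> 0 $ i"
        unfolding sum_divide_distrib
        using Pm_ent i Vs_ent k V1_pos by (intro sum.cong) (auto simp: less_imp_neq[symmetric])
      also have "\<dots> = row R i $ k" using xi_eq[OF i, of "k+1"] k R_def i by simp
      finally show "row R i $ k = vec (K - 1) (\<lambda>k. \<Sum>j<K. Pm $$ (i, j) * row Vs j $ k) $ k"
        using k by simp
    qed (use R_def in simp)
  qed
  have part3: "row R i = row Vs k \<longleftrightarrow> anchor_word A i k" if i: "i < p" and k: "k < K" for i k
  proof
    assume eq: "row R i = row Vs k"
    define c where "c j = Pm $$ (i, j) - (if j = k then 1 else 0)" for j
    have "(\<Sum>j<K. c j) = (\<Sum>j<K. Pm $$ (i, j)) - 1"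
      unfolding c_def sum_subtractf using k by simp
    also have "(\<Sum>j<K. Pm $$ (i, j)) = 1" using part2[OF i] Pi_def i
      unfolding weight_vector_def by simp
    finally have s0: "(\<Sum>j<K. c j) = 0" by simp
    have s1: "\<forall>m<K - 1. (\<Sum>j<K. c j * row Vs j $ m) = 0"
    proof (intro allI impI)
      fix m assume m: "m < K - 1"
      have "(\<Sum>j<K. c j * row Vs j $ m) = (\<Sum>j<K. Pm $$ (i, j) * row Vs j $ m)
          - (\<Sum>j<K. (if j = k then 1 else 0) * row Vs j $ m)"
        unfolding c_def sum_subtractf[symmetric] by (simp add: algebra_simps)
      also have "(\<Sum>j<K. Pm $$ (i, j) * row Vs j $ m) = row R i $ m"
        using part2[OF i] m by simp
      also have "(\<Sum>j<K. (if j = k then 1 else 0) * row Vs j $ m) = row Vs k $ m"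
      proof -
        have "(\<Sum>j<K. (if j = k then 1 else 0) * row Vs j $ m) = (\<Sum>j<K. if j = k then row Vs k $ m else 0)"
          by (intro sum.cong) auto
        thus ?thesis using k by simp
      qed
      finally show "(\<Sum>j<K. c j * row Vs j $ m) = 0" using eq by simp
    qed
    have c0: "\<forall>j<K. c j = 0" using aff s0 s1 unfolding affinely_independent_def by blast
    have "Pm $$ (i, k) = 1" using c0 k c_def by force
    hence "A $$ (i, k) \<noteq> 0" using Pm_ent[OF i k] by auto
    moreover have "A $$ (i, l) = 0" if "l < K" "l \<noteq> k" for l
    proof -
      have "Pm $$ (i, l) = 0" using c0 that c_def by force
      thus ?thesis using Pm_ent[OF i that(1)] V1_pos xi1_pos i that by auto
    qed
    ultimately show "anchor_word A i k" unfolding anchor_word_def using A_dim by auto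
  next
    assume aw: "anchor_word A i k"
    hence z: "A $$ (i, l) = 0" if "l < K" "l \<noteq> k" for l using that A_dim
      unfolding anchor_word_def by auto
    have nz: "A $$ (i, k) \<noteq> 0" using aw unfolding anchor_word_def by simp
    have single: "(\<Sum>j<K. A $$ (i, j) * V $$ (j, m)) = A $$ (i, k) * V $$ (k, m)" for m
    proof -
      have "(\<Sum>j<K. A $$ (i, j) * V $$ (j, m)) = (\<Sum>j<K. if j = k then A $$ (i, k) * V $$ (k, m) else 0)"
        using z by (intro sum.cong) auto
      thus ?thesis using k by simp
    qed
    show "row R i = row Vs k"
    proof (rule eq_vecI)
      fix m assume "m < dim_vec (row Vs k)"
      hence m: "m < K - 1" using Vs_def by simp
      have "row R i $ m = \<xi> (m + 1) $ i / \<xi> 0 $ i" using R_def i m by simp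
      also have "\<dots> = (A $$ (i, k) * V $$ (k, m + 1)) / (A $$ (i, k) * V $$ (k, 0))"
        using xi_eq[OF i, of "m+1"] xi_eq[OF i, of 0] m K2 single by simp
      also have "\<dots> = row Vs k $ m" using Vs_ent[OF k m] nz by simp
      finally show "row R i $ m = row Vs k $ m" .
    qed (use R_def Vs_def in simp)
  qed
  show ?thesis using aff part2 part3 by blast
qed

end
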